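(* Let $f:\mathbb{R}^d\to\mathbb{R}$ be $\beta$-smooth with minimum value $f^\star$, and run AdaSGD (as defined in the context) for $T$ steps with parameters $\eta,\gamma>0$ using a stochastic gradient oracle with bounded affine noise with parameters $\sigma_0,\sigma_1\ge0$. Then, with $G_t=\sqrt{\gamma^2+\sum_{s=1}^t\|g_s\|^2}$, $$\sum_{t=1}^T\frac{\|g_t\|^2}{G_t^2}\le C_1:=\log\Big(1+\frac{2\sigma_0^2T+8(1+\sigma_1^2)(\eta^2\beta^2T^3+\beta\Delta_1T)}{\gamma^2}\Big),$$ where $\Delta_1=f(w_1)-f^\star$.
   Context: $\|\cdot\|$ is the Euclidean norm and $\log$ the base-2 logarithm. $\beta$-smooth: $\|\nabla f(x)-\nabla f(y)\|\le\beta\|x-y\|$. Oracle: queried at $w$, returns random $g(w)$ with $\mathbb{E}[g(w)\mid w]=\nabla f(w)$ and, with probability one, $\|g(w)-\nabla f(w)\|^2\le\sigma_0^2+\sigma_1^2\|\nabla f(w)\|^2$. AdaSGD: arbitrary $w_1$; for $t=1,\dots,T$, $g_t=g(w_t)$, $\eta_t=\eta/\sqrt{\gamma^2+\sum_{s=1}^t\|g_s\|^2}$, $w_{t+1}=w_t-\eta_tg_t$. *)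

theory Defs
  imports "HOL-Analysis.Analysis"
begin

definition has_gradient_everywhere :: "('a::euclidean_space \<Rightarrow> real) \<Rightarrow> ('a \<Rightarrow> 'a) \<Rightarrow> bool" where
  "has_gradient_everywhere f f' \<longleftrightarrow> (\<forall>x. (f has_derivative (\<lambda>h. f' x \<bullet> h)) (at x))"

definition beta_smooth :: "real \<Rightarrow> ('a::euclidean_space \<Rightarrow> real) \<Rightarrow> ('a \<Rightarrow> 'a) \<Rightarrow> bool" where
  "beta_smooth \<beta> f f' \<longleftrightarrow> has_gradient_everywhere f f' \<and>
     (\<forall>x y. norm (f' x - f' y) \<le> \<beta> * norm (x - y))"

definition adasgd_G :: "real \<Rightarrow> (nat \<Rightarrow> 'a::real_normed_vector) \<Rightarrow> nat \<Rightarrow> real" where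
  "adasgd_G \<gamma> g t = sqrt (\<gamma>\<^sup>2 + (\<Sum>s=1..t. (norm (g s))\<^sup>2))"

definition adasgd_run :: "real \<Rightarrow> real \<Rightarrow> nat \<Rightarrow> (nat \<Rightarrow> 'a::real_normed_vector) \<Rightarrow> (nat \<Rightarrow> 'a) \<Rightarrow> bool" where
  "adasgd_run \<eta> \<gamma> T w g \<longleftrightarrow>
     (\<forall>t\<in>{1..T}. w (Suc t) = w t - (\<eta> / adasgd_G \<gamma> g t) *\<^sub>R g t)"

text \<open>Bounded affine noise, holding for the realised oracle outputs g_t = g(w_t).\<close>
definition affine_noise_bound :: "real \<Rightarrow> real \<Rightarrow> ('a::real_normed_vector \<Rightarrow> 'a) \<Rightarrow> nat \<Rightarrow> (nat \<Rightarrow> 'a) \<Rightarrow> (nat \<Rightarrow> 'a) \<Rightarrow> bool" where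
  "affine_noise_bound \<sigma>0 \<sigma>1 f' T w g \<longleftrightarrow>
     (\<forall>t\<in>{1..T}. (norm (g t - f' (w t)))\<^sup>2 \<le> \<sigma>0\<^sup>2 + \<sigma>1\<^sup>2 * (norm (f' (w t)))\<^sup>2)"

end

theory Submission
  imports Defs
begin

lemma descent:
  fixes f :: "'a::euclidean_space \<Rightarrow> real"
  assumes sm: "beta_smooth \<beta> f f'"
  shows "f (x + h) \<le> f x + f' x \<bullet> h + \<beta> / 2 * (norm h)\<^sup>2"
proof -
  have der: "\<And>y. (f has_derivative (\<lambda>v. f' y \<bullet> v)) (at y)"
    using sm unfolding beta_smooth_def has_gradient_everywhere_def by blast
  have lip: "\<And>a b. norm (f' a - f' b) \<le> \<beta> * norm (a - b)"
    using sm unfolding beta_smooth_def by blast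
  define \<phi> where "\<phi> t = f (x + t *\<^sub>R h) - t * (f' x \<bullet> h) - \<beta> / 2 * t\<^sup>2 * (norm h)\<^sup>2" for t
  have "\<phi> 1 \<le> \<phi> 0"
  proof (rule DERIV_nonpos_imp_nonincreasing[of 0 1])
    fix t :: real assume t: "0 \<le> t" "t \<le> 1"
    have d1: "((\<lambda>t. x + t *\<^sub>R h) has_derivative (\<lambda>s. s *\<^sub>R h)) (at t)"
      by (auto intro!: derivative_eq_intros)
    have d2: "((\<lambda>t. f (x + t *\<^sub>R h)) has_derivative (\<lambda>s. f' (x + t *\<^sub>R h) \<bullet> (s *\<^sub>R h))) (at t)"
      using has_derivative_compose[OF d1 der] by simp
    have e: "(\<lambda>s. f' (x + t *\<^sub>R h) \<bullet> (s *\<^sub>R h)) = (*) (f' (x + t *\<^sub>R h) \<bullet> h)"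
      by (rule ext) simp
    have d3: "((\<lambda>t. f (x + t *\<^sub>R h)) has_real_derivative (f' (x + t *\<^sub>R h) \<bullet> h)) (at t)"
      using d2 unfolding e has_field_derivative_def .
    have d4: "(\<phi> has_real_derivative (f' (x + t *\<^sub>R h) \<bullet> h - f' x \<bullet> h - \<beta> / 2 * (2 * t) * (norm h)\<^sup>2)) (at t)"
      unfolding \<phi>_def
      by (rule derivative_eq_intros d3 refl | simp)+
    have "(f' (x + t *\<^sub>R h) - f' x) \<bullet> h \<le> norm (f' (x + t *\<^sub>R h) - f' x) * norm h"
      by (rule norm_cauchy_schwarz)
    also have "\<dots> \<le> \<beta> * norm (t *\<^sub>R h) * norm h"
      using lip[of "x + t *\<^sub>R h" x] by (simp add: mult_right_mono)
    also have "\<dots> = \<beta> * t * (norm h)\<^sup>2" using t by (simp add: power2_eq_square)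
    finally have "f' (x + t *\<^sub>R h) \<bullet> h - f' x \<bullet> h - \<beta> / 2 * (2 * t) * (norm h)\<^sup>2 \<le> 0"
      by (simp add: inner_diff_left)
    then show "\<exists>y. (\<phi> has_real_derivative y) (at t) \<and> y \<le> 0" using d4 by blast
  qed simp
  then show ?thesis unfolding \<phi>_def by simp
qed

lemma beta_nonneg:
  fixes f :: "'a::euclidean_space \<Rightarrow> real"
  assumes sm: "beta_smooth \<beta> f f'"
  shows "\<beta> \<ge> 0"
proof -
  define b :: 'a where "b = (SOME i. i \<in> Basis)"
  have "norm (f' b - f' 0) \<le> \<beta> * norm (b - 0)"
    using sm unfolding beta_smooth_def by blast
  then show ?thesis using norm_some_Basis[where 'a='a] unfolding b_def
    by (metis diff_zero mult.right_neutral norm_ge_zero order_trans)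
qed

lemma grad_bound:
  fixes f :: "'a::euclidean_space \<Rightarrow> real"
  assumes sm: "beta_smooth \<beta> f f'" and fmin: "\<forall>x. fstar \<le> f x"
  shows "(norm (f' x))\<^sup>2 \<le> 2 * \<beta> * (f x - fstar)"
proof -
  have b0: "\<beta> \<ge> 0" by (rule beta_nonneg[OF sm])
  have key: "fstar \<le> f x - s * (norm (f' x))\<^sup>2 + \<beta> / 2 * s\<^sup>2 * (norm (f' x))\<^sup>2" for s
  proof -
    have "fstar \<le> f (x + (- s) *\<^sub>R f' x)" using fmin by blast
    also have "\<dots> \<le> f x + f' x \<bullet> ((- s) *\<^sub>R f' x) + \<beta> / 2 * (norm ((- s) *\<^sub>R f' x))\<^sup>2"
      by (rule descent[OF sm])
    also have "\<dots> = f x - s * (norm (f' x))\<^sup>2 + \<beta> / 2 * s\<^sup>2 * (norm (f' x))\<^sup>2"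
      by (simp add: power2_norm_eq_inner power_mult_distrib)
    finally show ?thesis .
  qed
  show ?thesis
  proof (cases "\<beta> = 0")
    case True
    show ?thesis
    proof (rule ccontr)
      assume "\<not> ?thesis"
      then have p: "(norm (f' x))\<^sup>2 > 0" using True by simp
      have "fstar \<le> f x - ((f x - fstar + 1) / (norm (f' x))\<^sup>2) * (norm (f' x))\<^sup>2"
        using key[of "(f x - fstar + 1) / (norm (f' x))\<^sup>2"] True by simp
      then show False using p by simp
    qed
  next
    case False
    then have bp: "\<beta> > 0" using b0 by simp
    have "fstar \<le> f x - (1/\<beta>) * (norm (f' x))\<^sup>2 + \<beta> / 2 * (1/\<beta>)\<^sup>2 * (norm (f' x))\<^sup>2"
      by (rule key)
    also have "\<dots> = f x - (norm (f' x))\<^sup>2 / (2 * \<beta>)"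
      using bp by (simp add: power2_eq_square field_simps)
    finally have "(norm (f' x))\<^sup>2 / (2 * \<beta>) \<le> f x - fstar" by simp
    then show ?thesis using bp by (simp add: field_simps)
  qed
qed

lemma telescope:
  fixes a :: "nat \<Rightarrow> real" and c :: real
  assumes c: "c > 0" and a: "\<And>t. a t \<ge> 0"
  shows "(\<Sum>t=1..T. a t / (c + (\<Sum>s=1..t. a s))) \<le> ln (c + (\<Sum>s=1..T. a s)) - ln c"
proof (induction T)
  case 0
  then show ?case by simp
next
  case (Suc T)
  define x where "x = c + (\<Sum>s=1..T. a s)"
  have x: "x > 0" unfolding x_def using c a by (smt (verit) sum_nonneg)
  have y: "c + (\<Sum>s=1..Suc T. a s) = x + a (Suc T)" unfolding x_def by simp
  have xy: "x + a (Suc T) > 0" using x a[of "Suc T"] by simp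
  have "ln (x / (x + a (Suc T))) \<le> x / (x + a (Suc T)) - 1"
    by (rule ln_le_minus_one) (use x xy in simp)
  also have "\<dots> = - a (Suc T) / (x + a (Suc T))" using xy by (simp add: field_simps)
  finally have st: "a (Suc T) / (x + a (Suc T)) \<le> ln (x + a (Suc T)) - ln x"
    using x xy by (simp add: ln_div)
  show ?case using Suc.IH st unfolding y by (simp add: x_def add.assoc)
qed


theorem lemma6:
  fixes f :: "'a::euclidean_space \<Rightarrow> real" and f' :: "'a \<Rightarrow> 'a"
    and \<beta> \<eta> \<gamma> \<sigma>0 \<sigma>1 fstar :: real and T :: nat
    and w g :: "nat \<Rightarrow> 'a"
  assumes smooth: "beta_smooth \<beta> f f'"
    and fmin: "\<forall>x. fstar \<le> f x" and fattained: "\<exists>x. f x = fstar"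
    and eta: "\<eta> > 0" and gamma: "\<gamma> > 0"
    and sig0: "\<sigma>0 \<ge> 0" and sig1: "\<sigma>1 \<ge> 0"
    and run: "adasgd_run \<eta> \<gamma> T w g"
    and noise: "affine_noise_bound \<sigma>0 \<sigma>1 f' T w g"
  shows "(\<Sum>t=1..T. (norm (g t))\<^sup>2 / (adasgd_G \<gamma> g t)\<^sup>2)
    \<le> log 2 (1 + (2 * \<sigma>0\<^sup>2 * real T
          + 8 * (1 + \<sigma>1\<^sup>2) * (\<eta>\<^sup>2 * \<beta>\<^sup>2 * real T ^ 3 + \<beta> * (f (w 1) - fstar) * real T))
        / \<gamma>\<^sup>2)"
proof -
  define a where "a t = (norm (g t))\<^sup>2" for t
  define S where "S = (\<Sum>s=1..T. a s)"
  define \<Delta> where "\<Delta> = f (w 1) - fstar"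
  define K where "K = 2 * \<sigma>0\<^sup>2 + 8 * (1 + \<sigma>1\<^sup>2) * (\<eta>\<^sup>2 * \<beta>\<^sup>2 * (real T)\<^sup>2 + \<beta> * \<Delta>)"
  have a0: "\<And>t. a t \<ge> 0" unfolding a_def by simp
  have g2: "\<gamma>\<^sup>2 > 0" using gamma by simp
  have b0: "\<beta> \<ge> 0" by (rule beta_nonneg[OF smooth])
  have D0: "\<Delta> \<ge> 0" unfolding \<Delta>_def using fmin by simp
  have G2: "(adasgd_G \<gamma> g t)\<^sup>2 = \<gamma>\<^sup>2 + (\<Sum>s=1..t. a s)" for t
    unfolding adasgd_G_def a_def by (simp add: sum_nonneg)
  have Gpos: "adasgd_G \<gamma> g t > 0" for t
    unfolding adasgd_G_def using g2 by (simp add: sum_nonneg add_pos_nonneg)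
  have gG: "norm (g t) \<le> adasgd_G \<gamma> g t" if "t \<ge> 1" for t
  proof -
    have "a t \<le> (\<Sum>s=1..t. a s)" by (rule member_le_sum) (use that a0 in auto)
    then have "(norm (g t))\<^sup>2 \<le> (adasgd_G \<gamma> g t)\<^sup>2" unfolding G2 a_def using g2 by (smt (verit))
    then show ?thesis using Gpos[of t] by (simp add: abs_le_square_iff[symmetric])
  qed
  have dist: "norm (w (Suc k) - w 1) \<le> \<eta> * real k" if "k \<le> T" for k
    using that
  proof (induction k)
    case 0
    then show ?case by simp
  next
    case (Suc k)
    have step: "w (Suc (Suc k)) = w (Suc k) - (\<eta> / adasgd_G \<gamma> g (Suc k)) *\<^sub>R g (Suc k)"
      using run Suc.prems unfolding adasgd_run_def by auto
    have "norm ((\<eta> / adasgd_G \<gamma> g (Suc k)) *\<^sub>R g (Suc k)) = \<eta> * (norm (g (Suc k)) / adasgd_G \<gamma> g (Suc k))"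
      using eta Gpos[of "Suc k"] by simp
    also have "\<dots> \<le> \<eta> * 1"
      using eta Gpos[of "Suc k"] gG[of "Suc k"] by (intro mult_left_mono) (auto simp: divide_le_eq_1)
    finally have sn: "norm ((\<eta> / adasgd_G \<gamma> g (Suc k)) *\<^sub>R g (Suc k)) \<le> \<eta>" by simp
    have "norm (w (Suc (Suc k)) - w 1) \<le> norm (w (Suc k) - w 1) + norm ((\<eta> / adasgd_G \<gamma> g (Suc k)) *\<^sub>R g (Suc k))"
      unfolding step using norm_triangle_ineq4[of "w (Suc k) - w 1" "(\<eta> / adasgd_G \<gamma> g (Suc k)) *\<^sub>R g (Suc k)"]
      by (simp add: algebra_simps)
    then show ?case using Suc sn by (simp add: algebra_simps)
  qed
  have bt: "a t \<le> K" if t: "t \<in> {1..T}" for t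
  proof -
    obtain k where k: "t = Suc k" "k \<le> T" using t by (cases t) auto
    have lip: "norm (f' (w t) - f' (w 1)) \<le> \<beta> * norm (w t - w 1)"
      using smooth unfolding beta_smooth_def by blast
    have "\<beta> * norm (w t - w 1) \<le> \<beta> * (\<eta> * real T)"
    proof (rule mult_left_mono[OF _ b0])
      show "norm (w t - w 1) \<le> \<eta> * real T"
        using dist[OF k(2)] k eta by (smt (verit) mult_left_mono of_nat_mono)
    qed
    with lip have "norm (f' (w t)) \<le> norm (f' (w 1)) + \<beta> * \<eta> * real T"
      by (smt (verit) norm_triangle_ineq2 mult.assoc)
    then have "(norm (f' (w t)))\<^sup>2 \<le> (norm (f' (w 1)) + \<beta> * \<eta> * real T)\<^sup>2"
      by (simp add: power_mono)
    also have "\<dots> \<le> 2 * (norm (f' (w 1)))\<^sup>2 + 2 * (\<beta> * \<eta> * real T)\<^sup>2"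
      by (smt (verit) sum_squares_bound power2_sum zero_le_power2 power2_diff)
    also have "\<dots> \<le> 4 * \<beta> * \<Delta> + 2 * (\<beta> * \<eta> * real T)\<^sup>2"
      using grad_bound[OF smooth fmin, of "w 1"] unfolding \<Delta>_def by simp
    finally have fb: "(norm (f' (w t)))\<^sup>2 \<le> 4 * \<beta> * \<Delta> + 2 * (\<beta> * \<eta> * real T)\<^sup>2" .
    have nb: "(norm (g t - f' (w t)))\<^sup>2 \<le> \<sigma>0\<^sup>2 + \<sigma>1\<^sup>2 * (norm (f' (w t)))\<^sup>2"
      using noise t unfolding affine_noise_bound_def by blast
    have "norm (g t) \<le> norm (g t - f' (w t)) + norm (f' (w t))"
      using norm_triangle_ineq[of "g t - f' (w t)" "f' (w t)"] by simp
    then have "(norm (g t))\<^sup>2 \<le> (norm (g t - f' (w t)) + norm (f' (w t)))\<^sup>2"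
      by (simp add: power_mono)
    also have "\<dots> \<le> 2 * (norm (g t - f' (w t)))\<^sup>2 + 2 * (norm (f' (w t)))\<^sup>2"
      by (smt (verit) power2_sum zero_le_power2 power2_diff)
    also have "\<dots> \<le> 2 * \<sigma>0\<^sup>2 + 2 * (1 + \<sigma>1\<^sup>2) * (norm (f' (w t)))\<^sup>2"
      using nb by (simp add: algebra_simps)
    also have "\<dots> \<le> 2 * \<sigma>0\<^sup>2 + 2 * (1 + \<sigma>1\<^sup>2) * (4 * \<beta> * \<Delta> + 2 * (\<beta> * \<eta> * real T)\<^sup>2)"
      using fb by (intro add_left_mono mult_left_mono) auto
    also have "\<dots> \<le> K" unfolding K_def
      using b0 D0 by (simp add: power_mult_distrib algebra_simps)
    finally show ?thesis unfolding a_def .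
  qed
  have SK: "S \<le> real T * K"
    unfolding S_def using sum_bounded_above[of "{1..T}" a K] bt by simp
  have TK: "real T * K = 2 * \<sigma>0\<^sup>2 * real T
          + 8 * (1 + \<sigma>1\<^sup>2) * (\<eta>\<^sup>2 * \<beta>\<^sup>2 * real T ^ 3 + \<beta> * (f (w 1) - fstar) * real T)"
    unfolding K_def \<Delta>_def by (simp add: power2_eq_square power3_eq_cube algebra_simps)
  have S0: "S \<ge> 0" unfolding S_def using a0 by (simp add: sum_nonneg)
  have "(\<Sum>t=1..T. (norm (g t))\<^sup>2 / (adasgd_G \<gamma> g t)\<^sup>2) = (\<Sum>t=1..T. a t / (\<gamma>\<^sup>2 + (\<Sum>s=1..t. a s)))"
    unfolding G2 a_def by simp
  also have "\<dots> \<le> ln (\<gamma>\<^sup>2 + S) - ln (\<gamma>\<^sup>2)"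
    unfolding S_def by (rule telescope[OF g2 a0])
  also have "\<dots> = ln (1 + S / \<gamma>\<^sup>2)"
  proof -
    have "1 + S / \<gamma>\<^sup>2 = (\<gamma>\<^sup>2 + S) / \<gamma>\<^sup>2" using g2 by (simp add: field_simps)
    moreover have "\<gamma>\<^sup>2 + S > 0" using g2 S0 by linarith
    ultimately show ?thesis using g2 by (simp add: ln_div)
  qed
  also have "\<dots> \<le> log 2 (1 + S / \<gamma>\<^sup>2)"
  proof -
    have l0: "ln (1 + S / \<gamma>\<^sup>2) \<ge> 0" using S0 g2 by simp
    have "ln (1 + S / \<gamma>\<^sup>2) \<le> ln (1 + S / \<gamma>\<^sup>2) / ln 2"
      using l0 ln_2_less_1 by (simp add: le_divide_eq mult_left_le)
    then show ?thesis by (simp add: log_def)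
  qed
  also have "\<dots> \<le> log 2 (1 + real T * K / \<gamma>\<^sup>2)"
    using S0 g2 SK by (simp add: divide_right_mono add_pos_nonneg)
  finally show ?thesis unfolding TK .
qed

end
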